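(* For $(t,s)\in\Lambda$ and $x\in\mathbb R^d$ define the Borel measure $g_{t,s}(x,dy)$ by $g_{t,t}(x,dy)=\delta_x$ and $g_{t,s}(x,A)=\int_Ag(t,s,x,y)\,dy$ for $t>s$ and Borel $A\subset\mathbb R^d$. Then for $t>s$ each measure $g_{t,s}(x,dy)$ is equivalent to Lebesgue measure on the Borel sets (same null sets), and for all $t\ge r\ge s$ in $I$, $x\in\mathbb R^d$ and Borel $A\subset\mathbb R^d$, $g_{t,s}(x,A)=\int_{\mathbb R^d}g_{r,s}(y,A)\,g_{t,r}(x,dy)$.
   Context: Let $d\ge1$, $\alpha\in(0,1)$, $I\subseteq\mathbb R$ either $\mathbb R$ or a right half-line, $\Lambda=\{(t,s)\in I\times I:t\ge s\}$. For $t\in I$, $(\mathcal A(t)\psi)(x)=\sum_{i,j}q_{ij}(t,x)D_{ij}\psi(x)+\sum_ib_i(t,x)D_i\psi(x)-c(t,x)\psi(x)$, with: $q_{ij},b_i,c\in C^{\alpha/2,\alpha}_{\rm loc}(I\times\mathbb R^d)$; $\inf c>-\infty$; $Q=(q_{ij})$ symmetric with $\langle Q(t,x)\xi,\xi\rangle\ge\eta(t,x)|\xi|^2$, $\inf\eta>0$; for every bounded interval $J\subset I$ there are positive $\varphi_J\in C^2(\mathbb R^d)$ with $\varphi_J\to+\infty$ at infinity and $\lambda_J$ with $\mathcal A(t)\varphi_J\le\lambda_J\varphi_J$ on $J\times\mathbb R^d$. $G(t,s)$ is the evolution operator on $C_b(\mathbb R^d)$ given by $G(t,s)f=u_f(t,\cdot)$,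 $u_f$ the unique solution, bounded on strips $[s,T]\times\mathbb R^d$ and in $C([s,\infty)\times\mathbb R^d)\cap C^{1+\alpha/2,2+\alpha}_{\rm loc}((s,\infty)\times\mathbb R^d)$, of $D_tu=\mathcal A(t)u$, $u(s)=f$. $g$ is its Green function: a positive function with $(G(t,s)f)(x)=\int g(t,s,x,y)f(y)dy$ for all $f\in C_b(\mathbb R^d)$, $t>s$. *)

theory Defs
  imports "HOL-Analysis.Analysis" "HOL-Probability.Probability"
begin

text \<open>Points of R^d are vectors of type real^'n (d = CARD('n) \<ge> 1).
  Time-space functions are curried: u :: real \<Rightarrow> real^'n \<Rightarrow> real.\<close>

definition pd :: "'n::finite \<Rightarrow> (real^'n \<Rightarrow> real) \<Rightarrow> real^'n \<Rightarrow> real" where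
  "pd i \<psi> x = deriv (\<lambda>h. \<psi> (x + h *\<^sub>R axis i 1)) 0"

definition pdiff_at :: "'n::finite \<Rightarrow> (real^'n \<Rightarrow> real) \<Rightarrow> real^'n \<Rightarrow> bool" where
  "pdiff_at i \<psi> x \<longleftrightarrow> (\<lambda>h. \<psi> (x + h *\<^sub>R axis i 1)) differentiable (at 0)"

definition C2 :: "(real^'n::finite \<Rightarrow> real) \<Rightarrow> bool" where
  "C2 \<psi> \<longleftrightarrow> (\<forall>i x. pdiff_at i \<psi> x) \<and> (\<forall>i j x. pdiff_at i (pd j \<psi>) x)
     \<and> continuous_on UNIV \<psi> \<and> (\<forall>i. continuous_on UNIV (pd i \<psi>))
     \<and> (\<forall>i j. continuous_on UNIV (pd i (pd j \<psi>)))"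

definition holder_loc :: "real \<Rightarrow> (real \<times> (real^'n::finite)) set \<Rightarrow> (real \<Rightarrow> real^'n \<Rightarrow> real) \<Rightarrow> bool" where
  "holder_loc \<alpha> S f \<longleftrightarrow>
     (\<forall>K. compact K \<and> K \<subseteq> S \<longrightarrow>
        (\<exists>C. \<forall>p\<in>K. \<forall>p'\<in>K. \<bar>f (fst p) (snd p) - f (fst p') (snd p')\<bar>
              \<le> C * (\<bar>fst p - fst p'\<bar> powr (\<alpha>/2) + norm (snd p - snd p') powr \<alpha>)))"

definition dt :: "(real \<Rightarrow> real^'n \<Rightarrow> real) \<Rightarrow> real \<Rightarrow> real^'n \<Rightarrow> real" where
  "dt u t x = deriv (\<lambda>\<tau>. u \<tau> x) t"

definition C12_loc :: "real \<Rightarrow> (real \<times> (real^'n::finite)) set \<Rightarrow> (real \<Rightarrow> real^'n \<Rightarrow> real) \<Rightarrow> bool" where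
  "C12_loc \<alpha> S u \<longleftrightarrow>
     (\<forall>(t,x)\<in>S. (\<lambda>\<tau>. u \<tau> x) differentiable (at t) \<and> (\<forall>i. pdiff_at i (u t) x)
                  \<and> (\<forall>i j. pdiff_at i (pd j (u t)) x))
     \<and> holder_loc \<alpha> S u \<and> holder_loc \<alpha> S (dt u)
     \<and> (\<forall>i. holder_loc \<alpha> S (\<lambda>t. pd i (u t)))
     \<and> (\<forall>i j. holder_loc \<alpha> S (\<lambda>t. pd i (pd j (u t))))"

definition Aop :: "('n::finite \<Rightarrow> 'n \<Rightarrow> real \<Rightarrow> real^'n \<Rightarrow> real) \<Rightarrow> ('n \<Rightarrow> real \<Rightarrow> real^'n \<Rightarrow> real)
     \<Rightarrow> (real \<Rightarrow> real^'n \<Rightarrow> real) \<Rightarrow> real \<Rightarrow> (real^'n \<Rightarrow> real) \<Rightarrow> real^'n \<Rightarrow> real" where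
  "Aop q b c t \<psi> x = (\<Sum>i\<in>UNIV. \<Sum>j\<in>UNIV. q i j t x * pd i (pd j \<psi>) x)
                      + (\<Sum>i\<in>UNIV. b i t x * pd i \<psi> x) - c t x * \<psi> x"

definition Cb :: "(real^'n::finite \<Rightarrow> real) \<Rightarrow> bool" where
  "Cb f \<longleftrightarrow> continuous_on UNIV f \<and> bounded (range f)"

definition cauchy_sol :: "real \<Rightarrow> ('n::finite \<Rightarrow> 'n \<Rightarrow> real \<Rightarrow> real^'n \<Rightarrow> real) \<Rightarrow> ('n \<Rightarrow> real \<Rightarrow> real^'n \<Rightarrow> real)
     \<Rightarrow> (real \<Rightarrow> real^'n \<Rightarrow> real) \<Rightarrow> real \<Rightarrow> (real^'n \<Rightarrow> real) \<Rightarrow> (real \<Rightarrow> real^'n \<Rightarrow> real) \<Rightarrow> bool" where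
  "cauchy_sol \<alpha> q b c s f u \<longleftrightarrow>
     continuous_on ({s..} \<times> UNIV) (\<lambda>p. u (fst p) (snd p))
     \<and> (\<forall>T. \<exists>M. \<forall>t\<in>{s..T}. \<forall>x. \<bar>u t x\<bar> \<le> M)
     \<and> C12_loc \<alpha> ({s<..} \<times> UNIV) u
     \<and> (\<forall>t>s. \<forall>x. dt u t x = Aop q b c t (u t) x)
     \<and> (\<forall>x. u s x = f x)"

definition green_op :: "(real \<Rightarrow> real \<Rightarrow> real^'n::finite \<Rightarrow> real^'n \<Rightarrow> real) \<Rightarrow> real
     \<Rightarrow> (real^'n \<Rightarrow> real) \<Rightarrow> real \<Rightarrow> real^'n \<Rightarrow> real" where
  "green_op g s f t x = (if s < t then (LINT y|lborel. g t s x y * f y) else f x)"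

definition green_measure :: "(real \<Rightarrow> real \<Rightarrow> real^'n::finite \<Rightarrow> real^'n \<Rightarrow> real)
     \<Rightarrow> real \<Rightarrow> real \<Rightarrow> real^'n \<Rightarrow> (real^'n) measure" where
  "green_measure g t s x =
     (if t = s then return lborel x else density lborel (\<lambda>y. ennreal (g t s x y)))"

definition admissible_interval :: "real set \<Rightarrow> bool" where
  "admissible_interval I \<longleftrightarrow> I = UNIV \<or> (\<exists>a. I = {a<..} \<or> I = {a..})"

end

theory Submission
  imports Defs "HOL-Probability.Probability"
begin


lemma holder_loc_mono: "holder_loc a S f \<Longrightarrow> S' \<subseteq> S \<Longrightarrow> holder_loc a S' f"
  unfolding holder_loc_def by blast

lemma C12_loc_mono: "C12_loc a S u \<Longrightarrow> S' \<subseteq> S \<Longrightarrow> C12_loc a S' u"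
  unfolding C12_loc_def using holder_loc_mono by blast

lemma sol_restrict:
  assumes "cauchy_sol a q b c s f u" "s \<le> r"
  shows "cauchy_sol a q b c r (u r) u"
proof -
  have sub: "{r..} \<times> (UNIV::(real^'a) set) \<subseteq> {s..} \<times> UNIV" using assms(2) by auto
  have sub2: "{r<..} \<times> (UNIV::(real^'a) set) \<subseteq> {s<..} \<times> UNIV" using assms(2) by auto
  have h: "continuous_on ({s..} \<times> UNIV) (\<lambda>p. u (fst p) (snd p))"
    "\<And>T. \<exists>M. \<forall>t\<in>{s..T}. \<forall>x. \<bar>u t x\<bar> \<le> M"
    "C12_loc a ({s<..} \<times> UNIV) u"
    "\<forall>t>s. \<forall>x. dt u t x = Aop q b c t (u t) x"
    using assms(1) unfolding cauchy_sol_def by blast+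
  have b2: "\<exists>M. \<forall>t\<in>{r..T}. \<forall>x. \<bar>u t x\<bar> \<le> M" for T
  proof -
    obtain M where "\<forall>t\<in>{s..T}. \<forall>x. \<bar>u t x\<bar> \<le> M" using h(2) by blast
    thus ?thesis using assms(2) by (intro exI[of _ M]) auto
  qed
  show ?thesis unfolding cauchy_sol_def
    using continuous_on_subset[OF h(1) sub] C12_loc_mono[OF h(3) sub2] h(4) assms(2) b2
    by auto
qed

lemma sol_Cb:
  assumes "cauchy_sol a q b c s f u" "s \<le> r"
  shows "Cb (u r)"
proof -
  have cont: "continuous_on ({s..} \<times> UNIV) (\<lambda>p. u (fst p) (snd p))" using assms unfolding cauchy_sol_def by blast
  have "continuous_on UNIV ((\<lambda>p. u (fst p) (snd p)) \<circ> (\<lambda>x. (r,x)))"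
    apply (rule continuous_on_compose)
     apply (intro continuous_intros)
    apply (rule continuous_on_subset[OF cont]) using assms(2) by auto
  hence c: "continuous_on UNIV (u r)" by (simp add: o_def)
  obtain M where "\<forall>t\<in>{s..r}. \<forall>x. \<bar>u t x\<bar> \<le> M" using assms unfolding cauchy_sol_def by blast
  hence "\<forall>x. \<bar>u r x\<bar> \<le> M" using assms(2) by auto
  hence "bounded (range (u r))" unfolding bounded_iff by auto
  with c show ?thesis unfolding Cb_def by blast
qed

locale gsetting =
  fixes \<alpha> :: real and I :: "real set"
    and q :: "'n::finite \<Rightarrow> 'n \<Rightarrow> real \<Rightarrow> real^'n \<Rightarrow> real"
    and b :: "'n \<Rightarrow> real \<Rightarrow> real^'n \<Rightarrow> real"
    and c :: "real \<Rightarrow> real^'n \<Rightarrow> real"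
    and g :: "real \<Rightarrow> real \<Rightarrow> real^'n \<Rightarrow> real^'n \<Rightarrow> real"
  assumes uniq: "\<And>s f u v. s \<in> I \<Longrightarrow> Cb f \<Longrightarrow> cauchy_sol \<alpha> q b c s f u \<Longrightarrow>
                 cauchy_sol \<alpha> q b c s f v \<Longrightarrow> \<forall>t\<ge>s. \<forall>x. u t x = v t x"
    and g_pos: "\<And>t s x y. s \<in> I \<Longrightarrow> t \<in> I \<Longrightarrow> s < t \<Longrightarrow> 0 < g t s x y"
    and g_meas: "\<And>t s x. s \<in> I \<Longrightarrow> t \<in> I \<Longrightarrow> s < t \<Longrightarrow> (\<lambda>y. g t s x y) \<in> borel_measurable lborel"
    and g_int: "\<And>t s x f. s \<in> I \<Longrightarrow> t \<in> I \<Longrightarrow> s < t \<Longrightarrow> Cb f \<Longrightarrow>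
                 integrable lborel (\<lambda>y. g t s x y * f y)"
    and g_green: "\<And>s f. s \<in> I \<Longrightarrow> Cb f \<Longrightarrow> cauchy_sol \<alpha> q b c s f (green_op g s f)"
begin

lemma semigroup:
  assumes "s \<in> I" "r \<in> I" "t \<in> I" "s < r" "r < t" "Cb f"
  shows "green_op g s f t x = green_op g r (green_op g s f r) t x"
proof -
  let ?h = "green_op g s f r"
  have sol: "cauchy_sol \<alpha> q b c s f (green_op g s f)" using g_green assms by blast
  have Ch: "Cb ?h" using sol_Cb[OF sol] assms by simp
  have s1: "cauchy_sol \<alpha> q b c r ?h (green_op g s f)" using sol_restrict[OF sol] assms by simp
  have s2: "cauchy_sol \<alpha> q b c r ?h (green_op g r ?h)" using g_green assms Ch by blast
  show ?thesis using uniq[OF assms(2) Ch s1 s2] assms by simp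
qed

lemma Cb_nonneg_int:
  assumes "s \<in> I" "r \<in> I" "s < r" "Cb f" "\<And>y. 0 \<le> f y"
  shows "(\<integral>\<^sup>+ y. ennreal (g r s z y * f y) \<partial>lborel) = ennreal (green_op g s f r z)"
  unfolding green_op_def using assms
  by (simp add: nn_integral_eq_integral g_int g_pos less_imp_le)

lemma green_nonneg:
  assumes "s \<in> I" "r \<in> I" "s < r" "\<And>y. 0 \<le> f y"
  shows "0 \<le> green_op g s f r z"
  unfolding green_op_def using assms
  by (simp add: g_pos less_imp_le)

lemma L1:
  assumes "s \<in> I" "r \<in> I" "t \<in> I" "s < r" "r < t" "Cb f" "\<And>y. 0 \<le> f y"
  shows "(\<integral>\<^sup>+ y. ennreal (g t s x y * f y) \<partial>lborel)
     = (\<integral>\<^sup>+ z. ennreal (g t r x z) * (\<integral>\<^sup>+ y. ennreal (g r s z y * f y) \<partial>lborel) \<partial>lborel)"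
proof -
  let ?h = "green_op g s f r"
  have sol: "cauchy_sol \<alpha> q b c s f (green_op g s f)" using g_green assms by blast
  have Ch: "Cb ?h" using sol_Cb[OF sol] assms by simp
  have hpos: "\<And>z. 0 \<le> ?h z" using green_nonneg assms by auto
  have "(\<integral>\<^sup>+ z. ennreal (g t r x z) * (\<integral>\<^sup>+ y. ennreal (g r s z y * f y) \<partial>lborel) \<partial>lborel)
     = (\<integral>\<^sup>+ z. ennreal (g t r x z * ?h z) \<partial>lborel)"
    apply (rule nn_integral_cong)
    using Cb_nonneg_int[OF assms(1,2,4,6,7)] hpos g_pos assms
    by (simp add: ennreal_mult less_imp_le)
  also have "\<dots> = ennreal (green_op g r ?h t x)"
    using Cb_nonneg_int[OF assms(2,3,5) Ch hpos] .
  also have "\<dots> = ennreal (green_op g s f t x)" using semigroup assms by simp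
  also have "\<dots> = (\<integral>\<^sup>+ y. ennreal (g t s x y * f y) \<partial>lborel)"
    using Cb_nonneg_int[OF assms(1,3) _ assms(6,7)] assms by simp
  finally show ?thesis by simp
qed

end


definition fapp :: "(real^'n::finite) set \<Rightarrow> nat \<Rightarrow> real^'n \<Rightarrow> real" where
  "fapp U n y = (if U = UNIV then 1 else min 1 (real n * infdist y (- U)))"

lemma fapp_Cb: "Cb (fapp U n)"
proof -
  have "continuous_on UNIV (fapp U n)"
    unfolding fapp_def by (cases "U = UNIV") (auto intro!: continuous_intros)
  moreover have "bounded (range (fapp U n))"
    unfolding bounded_iff fapp_def
    by (rule exI[of _ 1]) (auto simp: infdist_nonneg)
  ultimately show ?thesis unfolding Cb_def by blast
qed

lemma fapp_nonneg: "0 \<le> fapp U n y"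
  unfolding fapp_def by (auto simp: infdist_nonneg)

lemma fapp_mono: "m \<le> n \<Longrightarrow> fapp U m y \<le> fapp U n y"
proof -
  assume "m \<le> n"
  hence "real m * infdist y (- U) \<le> real n * infdist y (- U)"
    by (intro mult_right_mono) (auto simp: infdist_nonneg)
  thus ?thesis unfolding fapp_def by auto
qed

lemma fapp_lim:
  assumes "open U"
  shows "(\<lambda>n. fapp U n y) \<longlonglongrightarrow> indicator U y"
proof (cases "U = UNIV")
  case True then show ?thesis by (simp add: fapp_def)
next
  case False
  show ?thesis
  proof (cases "y \<in> U")
    case False
    then show ?thesis using \<open>U \<noteq> UNIV\<close> by (simp add: fapp_def)
  next
    case True
    have "infdist y (- U) > 0"
      using infdist_pos_not_in_closed[of "- U" y] assms True \<open>U \<noteq> UNIV\<close> by auto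
    then obtain N :: nat where N: "1 / infdist y (- U) < N" using reals_Archimedean2 by blast
    have "eventually (\<lambda>n. fapp U n y = 1) sequentially"
      unfolding eventually_sequentially
    proof (intro exI allI impI)
      fix n assume "N \<le> n"
      hence "1 / infdist y (- U) < real n" using N
        by (meson less_le_trans of_nat_le_iff)
      hence "1 \<le> real n * infdist y (- U)"
        using \<open>infdist y (- U) > 0\<close> by (simp add: divide_less_eq mult.commute)
      thus "fapp U n y = 1" using \<open>U \<noteq> UNIV\<close> by (simp add: fapp_def)
    qed
    then show ?thesis using True by (simp add: tendsto_eventually)
  qed
qed

lemma fapp_meas: "(\<lambda>y. fapp U n y) \<in> borel_measurable lborel"
  using fapp_Cb[of U n] unfolding Cb_def
  by (simp add: borel_measurable_continuous_onI)

lemma approx_open: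
  fixes U :: "(real^'n::finite) set"
  assumes "open U" and w: "w \<in> borel_measurable lborel" and fin: "\<And>y. w y \<noteq> top"
  shows "(\<lambda>n. \<integral>\<^sup>+ y. w y * ennreal (fapp U n y) \<partial>lborel) \<longlonglongrightarrow> (\<integral>\<^sup>+ y. w y * indicator U y \<partial>lborel)"
proof (rule nn_integral_LIMSEQ)
  show "incseq (\<lambda>n y. w y * ennreal (fapp U n y))"
    by (auto simp: incseq_def le_fun_def intro!: mult_left_mono ennreal_leI fapp_mono)
  show "\<And>i. (\<lambda>y. w y * ennreal (fapp U i y)) \<in> borel_measurable lborel"
    using w fapp_meas by measurable
  fix y
  have "(\<lambda>n. ennreal (fapp U n y)) \<longlonglongrightarrow> ennreal (indicator U y)"
    by (rule tendsto_ennrealI, rule fapp_lim[OF assms(1)])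
  hence "(\<lambda>n. w y * ennreal (fapp U n y)) \<longlonglongrightarrow> w y * ennreal (indicator U y)"
    by (rule ennreal_tendsto_cmult[rotated]) (use fin in \<open>simp add: top.not_eq_extremum\<close>)
  thus "(\<lambda>n. w y * ennreal (fapp U n y)) \<longlonglongrightarrow> w y * indicator U y"
    by (simp add: ennreal_indicator)
qed



context gsetting begin

lemma Cb_one: "Cb (\<lambda>_::real^'a::finite. 1::real)"
  unfolding Cb_def by (auto intro: continuous_on_const)

lemma CK:
  fixes s r t :: real and x :: "real^'n"
  assumes I3: "s \<in> I" "r \<in> I" "t \<in> I" and sr: "s < r" and rt: "r < t"
    and A: "A \<in> sets borel"
  defines "M \<equiv> \<lambda>z. density lborel (\<lambda>y. ennreal (g r s z y))"
  defines "Mt \<equiv> density lborel (\<lambda>y. ennreal (g t s x y))"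
  shows "(\<lambda>z. emeasure (M z) A) \<in> borel_measurable lborel
     \<and> emeasure Mt A = (\<integral>\<^sup>+ z. ennreal (g t r x z) * emeasure (M z) A \<partial>lborel)"
proof -
  have st: "s < t" using sr rt by simp
  have gm1[measurable]: "\<And>z. (\<lambda>y. g r s z y) \<in> borel_measurable lborel" using g_meas I3 sr by blast
  have gm2[measurable]: "(\<lambda>y. g t s x y) \<in> borel_measurable lborel" using g_meas I3 st by blast
  have gm3[measurable]: "(\<lambda>y. g t r x y) \<in> borel_measurable lborel" using g_meas I3 rt by blast
  have sM: "\<And>z. sets (M z) = sets borel" unfolding M_def by simp
  have spM: "\<And>z. space (M z) = UNIV" unfolding M_def by simp
  have sMt: "sets Mt = sets borel" "space Mt = UNIV" unfolding Mt_def by simp_all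
  have eM: "\<And>z B. B \<in> sets borel \<Longrightarrow> emeasure (M z) B = (\<integral>\<^sup>+ y. ennreal (g r s z y) * indicator B y \<partial>lborel)"
    unfolding M_def by (subst emeasure_density) auto
  have eMt: "\<And>B. B \<in> sets borel \<Longrightarrow> emeasure Mt B = (\<integral>\<^sup>+ y. ennreal (g t s x y) * indicator B y \<partial>lborel)"
    unfolding Mt_def by (subst emeasure_density) auto
  have gge: "\<And>a b z y. a \<in> I \<Longrightarrow> b \<in> I \<Longrightarrow> b < a \<Longrightarrow> 0 \<le> g a b z y" using g_pos less_imp_le by blast
  have L1': "\<And>f. Cb f \<Longrightarrow> (\<And>y. 0 \<le> f y) \<Longrightarrow>
      (\<integral>\<^sup>+ y. ennreal (g t s x y) * ennreal (f y) \<partial>lborel)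
     = (\<integral>\<^sup>+ z. ennreal (g t r x z) * (\<integral>\<^sup>+ y. ennreal (g r s z y) * ennreal (f y) \<partial>lborel) \<partial>lborel)"
    using L1[OF I3 sr rt] gge I3 sr rt st by (simp add: ennreal_mult)
  have Kc: "\<And>f. Cb f \<Longrightarrow> (\<And>y. 0 \<le> f y) \<Longrightarrow>
      (\<lambda>z. \<integral>\<^sup>+ y. ennreal (g r s z y) * ennreal (f y) \<partial>lborel) \<in> borel_measurable lborel"
  proof -
    fix f :: "real^'n \<Rightarrow> real" assume f: "Cb f" "\<And>y. 0 \<le> f y"
    have e: "\<And>z. (\<integral>\<^sup>+ y. ennreal (g r s z y) * ennreal (f y) \<partial>lborel) = ennreal (green_op g s f r z)"
      using Cb_nonneg_int[OF I3(1,2) sr f] gge I3 sr f by (simp add: ennreal_mult)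
    have sol: "cauchy_sol \<alpha> q b c s f (green_op g s f)" using g_green I3 f by blast
    have "continuous_on UNIV (green_op g s f r)" using sol_Cb[OF sol] sr unfolding Cb_def by simp
    hence "green_op g s f r \<in> borel_measurable lborel" by (simp add: borel_measurable_continuous_onI)
    thus "(\<lambda>z. \<integral>\<^sup>+ y. ennreal (g r s z y) * ennreal (f y) \<partial>lborel) \<in> borel_measurable lborel"
      unfolding e by measurable
  qed
  have basic: "(\<lambda>z. emeasure (M z) U) \<in> borel_measurable lborel
     \<and> emeasure Mt U = (\<integral>\<^sup>+ z. ennreal (g t r x z) * emeasure (M z) U \<partial>lborel)" if U: "open U" for U
  proof -
    have Ub: "U \<in> sets borel" using U by simp
    define T where "T = (\<lambda>n z. \<integral>\<^sup>+ y. ennreal (g r s z y) * ennreal (fapp U n y) \<partial>lborel)"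
    have Tm: "\<And>n. T n \<in> borel_measurable lborel" unfolding T_def using Kc fapp_Cb fapp_nonneg by blast
    have Tl: "\<And>z. (\<lambda>n. T n z) \<longlonglongrightarrow> emeasure (M z) U"
      unfolding T_def eM[OF Ub] by (rule approx_open[OF U]) auto
    have m: "(\<lambda>z. emeasure (M z) U) \<in> borel_measurable lborel"
      by (rule borel_measurable_LIMSEQ_order[OF Tl Tm])
    have Tinc: "incseq T"
      unfolding T_def incseq_def le_fun_def
      by (auto intro!: nn_integral_mono mult_left_mono ennreal_leI fapp_mono)
    have R: "(\<lambda>n. \<integral>\<^sup>+ z. ennreal (g t r x z) * T n z \<partial>lborel) \<longlonglongrightarrow> (\<integral>\<^sup>+ z. ennreal (g t r x z) * emeasure (M z) U \<partial>lborel)"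
    proof (rule nn_integral_LIMSEQ)
      show "incseq (\<lambda>n z. ennreal (g t r x z) * T n z)"
        using Tinc by (auto simp: incseq_def le_fun_def intro!: mult_left_mono)
      show "\<And>i. (\<lambda>z. ennreal (g t r x z) * T i z) \<in> borel_measurable lborel"
        using Tm by measurable
      show "\<And>z. (\<lambda>i. ennreal (g t r x z) * T i z) \<longlonglongrightarrow> ennreal (g t r x z) * emeasure (M z) U"
        by (rule ennreal_tendsto_cmult[OF _ Tl]) simp
    qed
    have L: "(\<lambda>n. \<integral>\<^sup>+ y. ennreal (g t s x y) * ennreal (fapp U n y) \<partial>lborel) \<longlonglongrightarrow> emeasure Mt U"
      unfolding eMt[OF Ub] by (rule approx_open[OF U]) auto
    have eq: "\<And>n. (\<integral>\<^sup>+ y. ennreal (g t s x y) * ennreal (fapp U n y) \<partial>lborel) = (\<integral>\<^sup>+ z. ennreal (g t r x z) * T n z \<partial>lborel)"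
      unfolding T_def by (rule L1'[OF fapp_Cb fapp_nonneg])
    have "emeasure Mt U = (\<integral>\<^sup>+ z. ennreal (g t r x z) * emeasure (M z) U \<partial>lborel)"
      using LIMSEQ_unique[OF L] R unfolding eq by blast
    with m show ?thesis by blast
  qed
  define P where "P = (\<lambda>B. (\<lambda>z. emeasure (M z) B) \<in> borel_measurable lborel
     \<and> emeasure Mt B = (\<integral>\<^sup>+ z. ennreal (g t r x z) * emeasure (M z) B \<partial>lborel))"
  have AS: "A \<in> sigma_sets UNIV {S. open S}" using A by (simp only: sets_borel)
  have IS: "Int_stable {S::(real^'n) set. open S}" by (auto simp: Int_stable_def)
  have cl: "{S::(real^'n) set. open S} \<subseteq> Pow UNIV" by auto
  have PU: "P UNIV" using basic[of UNIV] unfolding P_def by simp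
  have fU: "emeasure (M z) UNIV \<noteq> \<infinity>" for z
  proof -
    have "emeasure (M z) UNIV = (\<integral>\<^sup>+ y. ennreal (g r s z y * 1) \<partial>lborel)"
      by (simp add: eM)
    also have "\<dots> = ennreal (green_op g s (\<lambda>_. 1) r z)"
      using Cb_nonneg_int[OF I3(1,2) sr Cb_one] by simp
    finally show ?thesis by simp
  qed
  have fMt: "emeasure Mt UNIV \<noteq> \<infinity>"
  proof -
    have "emeasure Mt UNIV = (\<integral>\<^sup>+ y. ennreal (g t s x y * 1) \<partial>lborel)"
      by (simp add: eMt)
    also have "\<dots> = ennreal (green_op g s (\<lambda>_. 1) t x)"
      using Cb_nonneg_int[OF I3(1,3) st Cb_one] by simp
    finally show ?thesis by simp
  qed
  have "P A"
  proof (rule sigma_sets_induct_disjoint[OF IS cl AS])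
    show "\<And>U. U \<in> {S. open S} \<Longrightarrow> P U" using basic unfolding P_def by auto
    show "P {}" unfolding P_def by simp
  next
    fix B assume B: "B \<in> sigma_sets UNIV {S. open S}" and PB: "P B"
    have Bb: "B \<in> sets borel" using B by (simp only: sets_borel)
    have le: "emeasure (M z) B \<le> emeasure (M z) UNIV" for z
      by (rule emeasure_mono) (simp_all add: sM)
    have finB: "emeasure (M z) B \<noteq> \<infinity>" for z using le[of z] fU[of z] by (auto simp: top_unique)
    have c1: "emeasure (M z) (UNIV - B) = emeasure (M z) UNIV - emeasure (M z) B" for z
      by (rule emeasure_Diff) (use finB[of z] in \<open>simp_all add: sM Bb\<close>)
    have leT: "emeasure Mt B \<le> emeasure Mt UNIV" by (rule emeasure_mono) (simp_all add: sMt)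
    have finBT: "emeasure Mt B \<noteq> \<infinity>" using leT fMt by (auto simp: top_unique)
    have c2: "emeasure Mt (UNIV - B) = emeasure Mt UNIV - emeasure Mt B"
      by (rule emeasure_Diff) (use finBT in \<open>simp_all add: sMt Bb\<close>)
    have mB[measurable]: "(\<lambda>z. emeasure (M z) B) \<in> borel_measurable lborel" using PB unfolding P_def by blast
    have mU[measurable]: "(\<lambda>z. emeasure (M z) UNIV) \<in> borel_measurable lborel" using PU unfolding P_def by blast
    have "(\<integral>\<^sup>+ z. ennreal (g t r x z) * emeasure (M z) (UNIV - B) \<partial>lborel)
        = (\<integral>\<^sup>+ z. ennreal (g t r x z) * emeasure (M z) UNIV - ennreal (g t r x z) * emeasure (M z) B \<partial>lborel)"
      unfolding c1 by (rule nn_integral_cong) (simp add: ennreal_right_diff_distrib)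
    also have "\<dots> = (\<integral>\<^sup>+ z. ennreal (g t r x z) * emeasure (M z) UNIV \<partial>lborel)
         - (\<integral>\<^sup>+ z. ennreal (g t r x z) * emeasure (M z) B \<partial>lborel)"
    proof (rule nn_integral_diff)
      show "(\<integral>\<^sup>+ z. ennreal (g t r x z) * emeasure (M z) B \<partial>lborel) \<noteq> \<infinity>"
        using PB finBT unfolding P_def by simp
      show "AE z in lborel. ennreal (g t r x z) * emeasure (M z) B \<le> ennreal (g t r x z) * emeasure (M z) UNIV"
        using le by (auto intro!: mult_left_mono)
    qed measurable
    also have "\<dots> = emeasure Mt (UNIV - B)"
      using PU PB c2 unfolding P_def by simp
    finally show "P (UNIV - B)" unfolding P_def using c1 by simp
  next
    fix F :: "nat \<Rightarrow> (real^'n) set"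
    assume d: "disjoint_family F" and rF: "range F \<subseteq> sigma_sets UNIV {S. open S}" and PF: "\<And>i. P (F i)"
    have Fb: "range F \<subseteq> sets borel" using rF by (simp only: sets_borel)
    have mF[measurable]: "\<And>i. (\<lambda>z. emeasure (M z) (F i)) \<in> borel_measurable lborel" using PF unfolding P_def by blast
    have u1: "emeasure (M z) (\<Union>i. F i) = (\<Sum>i. emeasure (M z) (F i))" for z
      using suminf_emeasure[of F "M z"] Fb d sM by simp
    have u2: "emeasure Mt (\<Union>i. F i) = (\<Sum>i. emeasure Mt (F i))"
      using suminf_emeasure[of F Mt] Fb d sMt by simp
    have "(\<integral>\<^sup>+ z. ennreal (g t r x z) * emeasure (M z) (\<Union>i. F i) \<partial>lborel)
       = (\<integral>\<^sup>+ z. (\<Sum>i. ennreal (g t r x z) * emeasure (M z) (F i)) \<partial>lborel)"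
      unfolding u1 by simp
    also have "\<dots> = (\<Sum>i. \<integral>\<^sup>+ z. ennreal (g t r x z) * emeasure (M z) (F i) \<partial>lborel)"
      by (rule nn_integral_suminf) measurable
    also have "\<dots> = emeasure Mt (\<Union>i. F i)" using PF unfolding P_def u2 by simp
    finally show "P (\<Union>i. F i)" unfolding P_def u1 by simp
  qed
  thus ?thesis unfolding P_def .
qed
end


theorem corollary3p2:
  fixes \<alpha> :: real and I :: "real set"
    and q :: "'n::finite \<Rightarrow> 'n \<Rightarrow> real \<Rightarrow> real^'n \<Rightarrow> real"
    and b :: "'n \<Rightarrow> real \<Rightarrow> real^'n \<Rightarrow> real"
    and c :: "real \<Rightarrow> real^'n \<Rightarrow> real"
    and g :: "real \<Rightarrow> real \<Rightarrow> real^'n \<Rightarrow> real^'n \<Rightarrow> real"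
  assumes alpha: "0 < \<alpha>" "\<alpha> < 1"
    and I: "admissible_interval I"
    and q_reg: "\<And>i j. holder_loc \<alpha> (I \<times> UNIV) (q i j)"
    and b_reg: "\<And>i. holder_loc \<alpha> (I \<times> UNIV) (b i)"
    and c_reg: "holder_loc \<alpha> (I \<times> UNIV) c"
    and c_below: "\<exists>c0. \<forall>t\<in>I. \<forall>x. c0 \<le> c t x"
    and q_sym: "\<And>i j t x. q i j t x = q j i t x"
    and elliptic: "\<exists>\<eta>0>0. \<forall>t\<in>I. \<forall>x \<xi>.
                     (\<Sum>i\<in>UNIV. \<Sum>j\<in>UNIV. q i j t x * \<xi>$i * \<xi>$j) \<ge> \<eta>0 * (norm \<xi>)\<^sup>2"
    and lyapunov: "\<And>J. J \<subseteq> I \<Longrightarrow> is_interval J \<Longrightarrow> bounded J \<Longrightarrow>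
                     \<exists>\<phi> lam. C2 \<phi> \<and> (\<forall>x. 0 < \<phi> x) \<and> filterlim \<phi> at_top at_infinity
                           \<and> (\<forall>t\<in>J. \<forall>x. Aop q b c t \<phi> x \<le> lam * \<phi> x)"
    and uniq: "\<And>s f u v. s \<in> I \<Longrightarrow> Cb f \<Longrightarrow> cauchy_sol \<alpha> q b c s f u \<Longrightarrow>
                 cauchy_sol \<alpha> q b c s f v \<Longrightarrow> \<forall>t\<ge>s. \<forall>x. u t x = v t x"
    and g_pos: "\<And>t s x y. s \<in> I \<Longrightarrow> t \<in> I \<Longrightarrow> s < t \<Longrightarrow> 0 < g t s x y"
    and g_meas: "\<And>t s x. s \<in> I \<Longrightarrow> t \<in> I \<Longrightarrow> s < t \<Longrightarrow> (\<lambda>y. g t s x y) \<in> borel_measurable lborel"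
    and g_int: "\<And>t s x f. s \<in> I \<Longrightarrow> t \<in> I \<Longrightarrow> s < t \<Longrightarrow> Cb f \<Longrightarrow>
                 integrable lborel (\<lambda>y. g t s x y * f y)"
    and g_green: "\<And>s f. s \<in> I \<Longrightarrow> Cb f \<Longrightarrow> cauchy_sol \<alpha> q b c s f (green_op g s f)"
  shows "(\<forall>t\<in>I. \<forall>s\<in>I. \<forall>x. s < t \<longrightarrow> null_sets (green_measure g t s x) = null_sets lborel)
       \<and> (\<forall>t\<in>I. \<forall>r\<in>I. \<forall>s\<in>I. \<forall>x. \<forall>A\<in>sets borel. s \<le> r \<and> r \<le> t \<longrightarrow>
            emeasure (green_measure g t s x) A
              = (\<integral>\<^sup>+ y. emeasure (green_measure g r s y) A \<partial>(green_measure g t r x)))"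
  proof -
  interpret gsetting \<alpha> I q b c g
    using uniq g_pos g_meas g_int g_green by unfold_locales
  have gm: "\<And>t s x. green_measure g t s x = (if t = s then return lborel x else density lborel (\<lambda>y. ennreal (g t s x y)))"
    by (simp add: green_measure_def)
  have sets_gm[simp]: "\<And>t s x. sets (green_measure g t s x) = sets borel"
    by (simp add: green_measure_def)
  have P1: "null_sets (green_measure g t s x) = null_sets lborel" if "t \<in> I" "s \<in> I" "s < t" for t s x
  proof -
    have gmm: "(\<lambda>y. ennreal (g t s x y)) \<in> borel_measurable lborel" using g_meas that by measurable
    show ?thesis
    proof (rule set_eqI)
      fix N
      have "N \<in> null_sets (green_measure g t s x) \<longleftrightarrow> N \<in> sets lborel \<and> (AE y in lborel. y \<in> N \<longrightarrow> ennreal (g t s x y) = 0)"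
        using that gmm by (simp add: gm null_sets_density_iff)
      also have "\<dots> \<longleftrightarrow> N \<in> sets lborel \<and> (AE y in lborel. y \<notin> N)"
      proof -
        have "\<And>y. (y \<in> N \<longrightarrow> ennreal (g t s x y) = 0) \<longleftrightarrow> y \<notin> N"
          using g_pos[OF that(2,1,3)] by (metis ennreal_eq_0_iff not_le)
        thus ?thesis by simp
      qed
      also have "\<dots> \<longleftrightarrow> N \<in> null_sets lborel"
        by (metis AE_iff_null_sets null_setsD2)
      finally show "N \<in> null_sets (green_measure g t s x) \<longleftrightarrow> N \<in> null_sets lborel" .
    qed
  qed
  have up: "r + 1 \<in> I" if "r \<in> I" for r
    using I that unfolding admissible_interval_def by auto
  have meas: "(\<lambda>y. emeasure (green_measure g r s y) A) \<in> borel_measurable lborel"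
    if "s \<in> I" "r \<in> I" "s < r" "A \<in> sets borel" for r s A
  proof -
    have "(\<lambda>z. emeasure (density lborel (\<lambda>y. ennreal (g r s z y))) A) \<in> borel_measurable lborel"
      using CK[OF that(1,2) up[OF that(2)] that(3) _ that(4)] by simp
    thus ?thesis using that by (simp add: gm)
  qed
  have P2: "emeasure (green_measure g t s x) A
              = (\<integral>\<^sup>+ y. emeasure (green_measure g r s y) A \<partial>(green_measure g t r x))"
    if "t \<in> I" "r \<in> I" "s \<in> I" "A \<in> sets borel" "s \<le> r" "r \<le> t" for t r s x A
  proof (cases "s = r")
    case True
    have "(\<integral>\<^sup>+ y. emeasure (green_measure g r s y) A \<partial>(green_measure g t r x))
        = (\<integral>\<^sup>+ y. indicator A y \<partial>(green_measure g t r x))"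
      using True that by (simp add: gm)
    also have "\<dots> = emeasure (green_measure g t r x) A" using that by simp
    finally show ?thesis using True by simp
  next
    case False
    hence sr: "s < r" using that by simp
    show ?thesis
    proof (cases "r = t")
      case True
      have m: "(\<lambda>y. emeasure (green_measure g r s y) A) \<in> borel_measurable (return lborel x)"
        using meas[OF that(3,2) sr that(4)] by (simp cong: measurable_cong_sets)
      have rr: "green_measure g t r x = return lborel x" using True by (simp add: gm)
      have "(\<integral>\<^sup>+ y. emeasure (green_measure g r s y) A \<partial>return lborel x) = emeasure (green_measure g r s x) A"
        by (rule nn_integral_return[OF _ meas[OF that(3,2) sr that(4)]]) simp
      thus ?thesis using rr True by simp
    next
      case False
      hence rt: "r < t" using that by simp
      have C: "(\<lambda>z. emeasure (density lborel (\<lambda>y. ennreal (g r s z y))) A) \<in> borel_measurable lborel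
         \<and> emeasure (density lborel (\<lambda>y. ennreal (g t s x y))) A
            = (\<integral>\<^sup>+ z. ennreal (g t r x z) * emeasure (density lborel (\<lambda>y. ennreal (g r s z y))) A \<partial>lborel)"
        using CK[OF that(3,2,1) sr rt that(4)] by simp
      have gmm: "(\<lambda>y. ennreal (g t r x y)) \<in> borel_measurable lborel" using g_meas that rt by measurable
      show ?thesis using sr rt C
        by (simp add: gm nn_integral_density[OF gmm])
    qed
  qed
  show ?thesis using P1 P2 by blast
qed

end
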